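(* Let $X$ be a compact space and let $E$ be an equivalence relation on $X$. If $E$ has an equivalence class which is not closed, then $E$ does not have any closed graphing of finite diameter.
   Context: A graphing of $E$ is a simple undirected graph $G\subseteq X\times X$ whose connectedness relation (connected by a finite path) equals $E$; it is closed if $G$ is closed in $X\times X$. $G$ has finite diameter $k$ if $k$ is the least integer such that any two $G$-connected points are joined by a path of length at most $k$. Spaces are recursive Polish spaces. *)

theory Defs
  imports "HOL-Analysis.Analysis"
begin

definition graphing :: "('a \<times> 'a) set \<Rightarrow> ('a \<times> 'a) set \<Rightarrow> bool" where
  "graphing E G \<longleftrightarrow> sym G \<and> irrefl G \<and> G\<^sup>* = E"

definition finite_diameter :: "('a \<times> 'a) set \<Rightarrow> bool" where
  "finite_diameter G \<longleftrightarrow> (\<exists>k::nat. \<forall>x y. (x, y) \<in> G\<^sup>* \<longrightarrow> (\<exists>n\<le>k. (x, y) \<in> G ^^ n))"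

end

theory Submission
  imports Defs
begin

lemma closed_Id_rel: "closed (Id :: ('a::t2_space \<times> 'a) set)"
proof -
  have "Id = {p::'a\<times>'a. fst p = snd p}" by auto
  moreover have "closed {p::'a\<times>'a. fst p = snd p}"
    by (intro closed_Collect_eq continuous_intros)
  ultimately show ?thesis by simp
qed

lemma closed_relcomp_compact:
  fixes R S :: "('a::t2_space \<times> 'a) set"
  assumes c: "compact (UNIV :: 'a set)" and R: "closed R" and S: "closed S"
  shows "closed (R O S)"
proof -
  define T where "T = {p::'a\<times>'a\<times>'a. (fst p, fst (snd p)) \<in> R \<and> (fst (snd p), snd (snd p)) \<in> S}"
  have "T = (\<lambda>p. (fst p, fst (snd p))) -` R \<inter> (\<lambda>p. (fst (snd p), snd (snd p))) -` S"
    unfolding T_def by auto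
  moreover have "closed ((\<lambda>p::'a\<times>'a\<times>'a. (fst p, fst (snd p))) -` R)"
    by (intro continuous_closed_vimage R continuous_intros)
  moreover have "closed ((\<lambda>p::'a\<times>'a\<times>'a. (fst (snd p), snd (snd p))) -` S)"
    by (intro continuous_closed_vimage S continuous_intros)
  ultimately have "closed T" by auto
  moreover have "compact (UNIV :: ('a\<times>'a\<times>'a) set)"
    using c by (metis UNIV_Times_UNIV compact_Times)
  ultimately have "compact T"
    using compact_Int_closed[of UNIV T] by simp
  hence "compact ((\<lambda>p. (fst p, snd (snd p))) ` T)"
    by (intro compact_continuous_image continuous_intros)
  moreover have "(\<lambda>p. (fst p, snd (snd p))) ` T = R O S"
    unfolding T_def by (auto simp: image_iff relcomp.simps)
  ultimately show ?thesis using compact_imp_closed by metis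
qed

lemma closed_relpow:
  fixes G :: "('a::t2_space \<times> 'a) set"
  assumes "compact (UNIV :: 'a set)" "closed G"
  shows "closed (G ^^ n)"
  by (induction n) (auto simp: closed_Id_rel intro!: closed_relcomp_compact assms)

theorem theorem3p5:
  fixes E :: "('a::polish_space \<times> 'a) set"
  assumes "compact (UNIV :: 'a set)"
    and "equiv UNIV E"
    and "\<exists>x. \<not> closed (E `` {x})"
  shows "\<not> (\<exists>G. graphing E G \<and> closed G \<and> finite_diameter G)"
proof
  assume "\<exists>G. graphing E G \<and> closed G \<and> finite_diameter G"
  then obtain G k where g: "G\<^sup>* = E" and cG: "closed G"
    and k: "\<forall>x y. (x, y) \<in> G\<^sup>* \<longrightarrow> (\<exists>n\<le>k. (x, y) \<in> G ^^ n)"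
    unfolding graphing_def finite_diameter_def by blast
  have "E = (\<Union>n\<in>{..k}. G ^^ n)"
    using k g by (auto simp: rtrancl_power)
  moreover have "closed (\<Union>n\<in>{..k}. G ^^ n)"
    by (intro closed_UN finite_atMost ballI closed_relpow assms(1) cG)
  ultimately have cE: "closed E" by simp
  obtain x where nx: "\<not> closed (E `` {x})" using assms(3) by blast
  have "E `` {x} = (\<lambda>y. (x, y)) -` E" by auto
  moreover have "closed ((\<lambda>y. (x, y)) -` E)"
    by (intro continuous_closed_vimage cE continuous_intros)
  ultimately show False using nx by simp
qed

end
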